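(* For every $\alpha\in\mathcal{U}_p(\mu,\nu)$ and every Borel measurable scaling function $v$, one has $\mathrm{dil}_v(\alpha)\in\mathcal{U}_p(\mu,\nu)$ and $\mathcal{H}(\mathrm{dil}_v(\alpha))=\mathcal{H}(\alpha)$. In particular the problem $\mathrm{CGW}$ is invariant to dilations.
   Context: Let $\mathcal{X}=(X,d_X,\mu)$, $\mathcal{Y}=(Y,d_Y,\nu)$ be mm-spaces (complete separable metric spaces with positive finite Borel measures). Fix an entropy $\phi$ (convex lsc $\phi:\mathbb{R}_+\to[0,\infty]$, $\phi(1)=0$), its reverse entropy $\psi(r)=r\phi(1/r)$, $\psi(0)=\phi'_\infty:=\lim_{r\to\infty}\phi(r)/r$, $\psi'_\infty=\phi(0)$, a function $\lambda:\mathbb{R}_+\to\mathbb{R}$, exponents $p,q>0$, and a distance $\Delta$ on $\mathbb{R}_+$. Let $L_c(r,s)=c+\psi(r)+\psi(s)$, $H_c(r,s)=\inf_{\theta\ge0}\theta L_c(r/\theta,s/\theta)$ (value at $\theta=0$ being $\psi'_\infty(r+s)$). Cones $\mathcal{C}[Z]=(Z\times\mathbb{R}_+)/(Z\times\{0\})$ with points $[z,r]$. $\mathcal{D}([a,u],[b,v])^q=H_{\lambda(\Delta(a,b))}(u^p,v^p)$ on $\mathcal{C}[\mathbb{R}_+]$. $\mathcal{U}_p(\mu,\nu)$ is the set of $\alpha\in\mathcal{M}_+(\mathcal{C}[X]\times\mathcal{C}[Y])$ with $\int\xi(x)r^p\,d\alpha([x,r],[y,s])=\int\xi\,d\mu$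 and $\int\zeta(y)s^p\,d\alpha([x,r],[y,s])=\int\zeta\,d\nu$ for all continuous bounded $\xi,\zeta$. $\mathcal{H}(\alpha)=\int\mathcal{D}([d_X(x,x'),rr'],[d_Y(y,y'),ss'])^q\,d\alpha([x,r],[y,s])\,d\alpha([x',r'],[y',s'])$, $\mathrm{CGW}=\inf_{\mathcal{U}_p(\mu,\nu)}\mathcal{H}$. Dilation: for a Borel measurable scaling function $v:\mathcal{C}[X]\times\mathcal{C}[Y]\to(0,\infty)$, with $w=v([x,r],[y,s])$ and $h_v([x,r],[y,s])=([x,r/w],[y,s/w])$, set $\mathrm{dil}_v(\alpha)=(h_v)_\sharp(v^p\alpha)$, i.e. $\int\xi\,d\,\mathrm{dil}_v(\alpha)=\int\xi([x,r/w],[y,s/w])\,w^p\,d\alpha$ for all test functions $\xi$. *)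

theory Defs
  imports "HOL-Analysis.Analysis"
begin

(* The underlying complete separable metric space is a type of class polish_space,
   with d_X = dist; mu is a finite (nonnegative) Borel measure on it. *)
definition mm_measure :: "'a::polish_space measure \<Rightarrow> bool" where
  "mm_measure \<mu> \<longleftrightarrow> sets \<mu> = sets borel \<and> finite_measure \<mu>"

definition entropy :: "(real \<Rightarrow> ereal) \<Rightarrow> bool" where
  "entropy \<phi> \<longleftrightarrow>
     (\<forall>x\<ge>0. \<phi> x \<ge> 0) \<and> \<phi> 1 = 0 \<and>
     (\<forall>x y t. x \<ge> 0 \<longrightarrow> y \<ge> 0 \<longrightarrow> 0 \<le> t \<longrightarrow> t \<le> 1 \<longrightarrow>
        \<phi> (t * x + (1 - t) * y) \<le> ereal t * \<phi> x + ereal (1 - t) * \<phi> y) \<and>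
     (\<forall>x\<ge>0. \<forall>xs. (\<forall>n. xs n \<ge> 0) \<longrightarrow> xs \<longlonglongrightarrow> x \<longrightarrow> \<phi> x \<le> liminf (\<lambda>n. \<phi> (xs n)))"

definition phi_rec :: "(real \<Rightarrow> ereal) \<Rightarrow> ereal" where
  "phi_rec \<phi> = Lim at_top (\<lambda>r. \<phi> r / ereal r)"

definition rev_entropy :: "(real \<Rightarrow> ereal) \<Rightarrow> real \<Rightarrow> ereal" where
  "rev_entropy \<phi> r = (if r = 0 then phi_rec \<phi> else ereal r * \<phi> (1 / r))"

definition Lc :: "(real \<Rightarrow> ereal) \<Rightarrow> real \<Rightarrow> real \<Rightarrow> real \<Rightarrow> ereal" where
  "Lc \<phi> c r s = ereal c + rev_entropy \<phi> r + rev_entropy \<phi> s"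

(* H_c(r,s) = inf_{theta \<ge> 0} theta L_c(r/theta, s/theta), the value at theta = 0 being
   psi'_\<infinity> (r+s) = phi(0) (r+s) *)
definition Hc :: "(real \<Rightarrow> ereal) \<Rightarrow> real \<Rightarrow> real \<Rightarrow> real \<Rightarrow> ereal" where
  "Hc \<phi> c r s = min (\<phi> 0 * ereal (r + s))
                     (INF \<theta>\<in>{0<..}. ereal \<theta> * Lc \<phi> c (r / \<theta>) (s / \<theta>))"

definition distance_on :: "real set \<Rightarrow> (real \<Rightarrow> real \<Rightarrow> real) \<Rightarrow> bool" where
  "distance_on S \<Delta> \<longleftrightarrow>
     (\<forall>a\<in>S. \<forall>b\<in>S. \<Delta> a b \<ge> 0 \<and> (\<Delta> a b = 0 \<longleftrightarrow> a = b) \<and> \<Delta> a b = \<Delta> b a) \<and>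
     (\<forall>a\<in>S. \<forall>b\<in>S. \<forall>c\<in>S. \<Delta> a c \<le> \<Delta> a b + \<Delta> b c)"

definition Dq :: "(real \<Rightarrow> ereal) \<Rightarrow> (real \<Rightarrow> real) \<Rightarrow> (real \<Rightarrow> real \<Rightarrow> real) \<Rightarrow> real
                  \<Rightarrow> real \<Rightarrow> real \<Rightarrow> real \<Rightarrow> real \<Rightarrow> ereal" where
  "Dq \<phi> lam \<Delta> p a u b v = Hc \<phi> (lam (\<Delta> a b)) (u powr p) (v powr p)"

(* ---------- cones ----------
   A point [x,r] of C[X] is represented by the pair (x,r) with r \<ge> 0.
   Measures on C[X] x C[Y] are represented by Borel measures on (X x R) x (Y x R)
   concentrated on {r \<ge> 0, s \<ge> 0}. *)
type_synonym ('a, 'b) conepair = "('a \<times> real) \<times> ('b \<times> real)"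

(* M_+(C[X] x C[Y]) : positive (sigma-finite, cf. Radon) Borel measures on the cone product *)
definition Mplus :: "('a::polish_space, 'b::polish_space) conepair measure \<Rightarrow> bool" where
  "Mplus \<alpha> \<longleftrightarrow> sets \<alpha> = sets borel \<and> sigma_finite_measure \<alpha> \<and>
     (AE z in \<alpha>. snd (fst z) \<ge> 0 \<and> snd (snd z) \<ge> 0)"

definition Up :: "real \<Rightarrow> 'a::polish_space measure \<Rightarrow> 'b::polish_space measure
                  \<Rightarrow> ('a, 'b) conepair measure \<Rightarrow> bool" where
  "Up p \<mu> \<nu> \<alpha> \<longleftrightarrow> Mplus \<alpha> \<and>
     (\<forall>\<xi>::'a \<Rightarrow> real. continuous_on UNIV \<xi> \<and> bounded (range \<xi>) \<longrightarrow>
        integrable \<alpha> (\<lambda>z. \<xi> (fst (fst z)) * snd (fst z) powr p) \<and>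
        (\<integral>z. \<xi> (fst (fst z)) * snd (fst z) powr p \<partial>\<alpha>) = (\<integral>x. \<xi> x \<partial>\<mu>)) \<and>
     (\<forall>\<zeta>::'b \<Rightarrow> real. continuous_on UNIV \<zeta> \<and> bounded (range \<zeta>) \<longrightarrow>
        integrable \<alpha> (\<lambda>z. \<zeta> (fst (snd z)) * snd (snd z) powr p) \<and>
        (\<integral>z. \<zeta> (fst (snd z)) * snd (snd z) powr p \<partial>\<alpha>) = (\<integral>y. \<zeta> y \<partial>\<nu>))"

definition gw_cost :: "(real \<Rightarrow> ereal) \<Rightarrow> (real \<Rightarrow> real) \<Rightarrow> (real \<Rightarrow> real \<Rightarrow> real) \<Rightarrow> real
     \<Rightarrow> ('a::metric_space, 'b::metric_space) conepair \<Rightarrow> ('a, 'b) conepair \<Rightarrow> ereal" where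
  "gw_cost \<phi> lam \<Delta> p z z' =
     (case z of ((x, r), (y, s)) \<Rightarrow> case z' of ((x', r'), (y', s')) \<Rightarrow>
        Dq \<phi> lam \<Delta> p (dist x x') (r * r') (dist y y') (s * s'))"

(* H(alpha) = \<integral>\<integral> gw_cost d alpha(z) d alpha(z'); the (possibly sign-changing, extended-real)
   integrand is integrated as positive part minus negative part (each an iterated
   nonnegative integral). *)
definition Hfun :: "(real \<Rightarrow> ereal) \<Rightarrow> (real \<Rightarrow> real) \<Rightarrow> (real \<Rightarrow> real \<Rightarrow> real) \<Rightarrow> real
     \<Rightarrow> ('a::metric_space, 'b::metric_space) conepair measure \<Rightarrow> ereal" where
  "Hfun \<phi> lam \<Delta> p \<alpha> =
     enn2ereal (\<integral>\<^sup>+z'. \<integral>\<^sup>+z. e2ennreal (max 0 (gw_cost \<phi> lam \<Delta> p z z')) \<partial>\<alpha> \<partial>\<alpha>)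
   - enn2ereal (\<integral>\<^sup>+z'. \<integral>\<^sup>+z. e2ennreal (max 0 (- gw_cost \<phi> lam \<Delta> p z z')) \<partial>\<alpha> \<partial>\<alpha>)"

definition hdil :: "(('a, 'b) conepair \<Rightarrow> real) \<Rightarrow> ('a, 'b) conepair \<Rightarrow> ('a, 'b) conepair" where
  "hdil v z = (case z of ((x, r), (y, s)) \<Rightarrow> ((x, r / v z), (y, s / v z)))"

definition dil :: "real \<Rightarrow> (('a::polish_space, 'b::polish_space) conepair \<Rightarrow> real)
                   \<Rightarrow> ('a, 'b) conepair measure \<Rightarrow> ('a, 'b) conepair measure" where
  "dil p v \<alpha> = distr (density \<alpha> (\<lambda>z. ennreal (v z powr p))) borel (hdil v)"

end

theory Submission
  imports Defs
begin

lemma ereal_INF_cmult':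
  assumes "c > (0::real)"
  shows "ereal c * (INF x\<in>S. f x) = (INF x\<in>S. ereal c * f x)"
proof -
  have "bij ((*) (ereal c))"
    apply (rule bij_betw_byWitness[of _ "\<lambda>x. (x::ereal) / c"], auto simp: assms ereal_mult_divide)
    using assms ereal_divide_eq by auto
  moreover have "mono ((*) (ereal c))"
    by (simp add: assms ereal_mult_left_mono less_imp_le mono_def)
  ultimately show ?thesis
    by (simp add: mono_bij_Inf image_comp comp_def)
qed

lemma ereal_min_cmult:
  assumes "c > (0::real)"
  shows "ereal c * min a b = min (ereal c * a) (ereal c * b)"
  using assms by (cases "a \<le> b") (auto simp: min_def ereal_mult_left_mono ereal_mult_le_mult_iff)

lemma Hc_hom:
  assumes "t > (0::real)"
  shows "Hc \<phi> c (t * a) (t * b) = ereal t * Hc \<phi> c a b"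
proof -
  have 1: "\<phi> 0 * ereal (t * a + t * b) = ereal t * (\<phi> 0 * ereal (a + b))"
  proof -
    have "ereal (t * a + t * b) = ereal t * ereal (a + b)" by (simp add: distrib_left)
    then show ?thesis by (metis mult.left_commute)
  qed
  have 2: "(INF \<theta>\<in>{0<..}. ereal \<theta> * Lc \<phi> c (t * a / \<theta>) (t * b / \<theta>))
      = (INF \<theta>\<in>{0<..}. ereal t * (ereal \<theta> * Lc \<phi> c (a / \<theta>) (b / \<theta>)))"
  proof -
    have img: "{0<..} = (\<lambda>x. t * x) ` ({0<..}::real set)"
      using assms by (auto simp: image_iff intro!: bexI[of _ "x / t" for x])
    have "(INF \<theta>\<in>{0<..}. ereal \<theta> * Lc \<phi> c (t * a / \<theta>) (t * b / \<theta>))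
       = (INF \<theta>\<in>(\<lambda>x. t * x) ` {0<..}. ereal \<theta> * Lc \<phi> c (t * a / \<theta>) (t * b / \<theta>))"
      by (subst img[symmetric]) simp
    also have "\<dots> = (INF \<theta>\<in>{0<..}. ereal (t * \<theta>) * Lc \<phi> c (t * a / (t * \<theta>)) (t * b / (t * \<theta>)))"
      by (simp add: image_comp comp_def)
    also have "\<dots> = (INF \<theta>\<in>{0<..}. ereal t * (ereal \<theta> * Lc \<phi> c (a / \<theta>) (b / \<theta>)))"
      using assms by (intro INF_cong refl) (simp add: mult.assoc times_ereal.simps(1)[symmetric] del: times_ereal.simps)
    finally show ?thesis .
  qed
  show ?thesis
    unfolding Hc_def 1 2 using assms by (simp add: ereal_INF_cmult' ereal_min_cmult)
qed

lemma hdil_eq: "hdil v z = ((fst (fst z), snd (fst z) / v z), (fst (snd z), snd (snd z) / v z))"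
  by (cases z) (auto simp: hdil_def)

lemma powr_hom:
  fixes r r' w w' p :: real
  assumes "r \<ge> 0" "r' \<ge> 0" "w > 0" "w' > 0"
  shows "(r / w * (r' / w')) powr p = inverse (w powr p * w' powr p) * (r * r') powr p"
proof -
  have "r / w * (r' / w') = (r * r') / (w * w')" by (simp only: times_divide_times_eq)
  then show ?thesis using assms
    by (simp add: powr_divide powr_mult field_simps)
qed

lemma gw_cost_hom:
  fixes z z' :: "('a::metric_space, 'b::metric_space) conepair"
  assumes "snd (fst z) \<ge> 0" "snd (snd z) \<ge> 0" "snd (fst z') \<ge> 0" "snd (snd z') \<ge> 0"
    and "\<forall>z. v z > 0"
  shows "gw_cost \<phi> lam \<Delta> p (hdil v z) (hdil v z')
       = ereal (inverse (v z powr p * v z' powr p)) * gw_cost \<phi> lam \<Delta> p z z'"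
proof -
  obtain x r y s where z: "z = ((x, r), (y, s))" by (metis prod.collapse)
  obtain x' r' y' s' where z': "z' = ((x', r'), (y', s'))" by (metis prod.collapse)
  have w: "v z > 0" "v z' > 0" using assms(5) by blast+
  have t: "inverse (v z powr p * v z' powr p) > 0" using w by simp
  have e1: "(r / v z * (r' / v z')) powr p = inverse (v z powr p * v z' powr p) * (r * r') powr p"
    using assms w unfolding z z' by (intro powr_hom) auto
  have e2: "(s / v z * (s' / v z')) powr p = inverse (v z powr p * v z' powr p) * (s * s') powr p"
    using assms w unfolding z z' by (intro powr_hom) auto
  have "gw_cost \<phi> lam \<Delta> p (hdil v z) (hdil v z') = Hc \<phi> (lam (\<Delta> (dist x x') (dist y y')))
     ((r / v z * (r' / v z')) powr p) ((s / v z * (s' / v z')) powr p)"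
    unfolding z z' by (simp only: hdil_def gw_cost_def Dq_def prod.case)
  also have "\<dots> = ereal (inverse (v z powr p * v z' powr p)) * Hc \<phi> (lam (\<Delta> (dist x x') (dist y y'))) ((r * r') powr p) ((s * s') powr p)"
    unfolding e1 e2 using t by (rule Hc_hom)
  also have "\<dots> = ereal (inverse (v z powr p * v z' powr p)) * gw_cost \<phi> lam \<Delta> p z z'"
    unfolding z z' by (simp only: gw_cost_def Dq_def prod.case)
  finally show ?thesis .
qed

lemma e2_hom:
  assumes "c > (0::real)"
  shows "e2ennreal (max 0 (ereal c * G)) = ennreal c * e2ennreal (max 0 G)"
proof (cases G)
  case (real g)
  then show ?thesis using assms
    by (simp add: max_def ennreal_mult'[symmetric] zero_le_mult_iff zero_ereal_def)
next
  case PInf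
  then show ?thesis using assms by (simp add: ennreal_mult_top)
next
  case MInf
  then show ?thesis using assms by (simp add: max_def zero_ereal_def)
qed

lemma hdil_meas:
  fixes v :: "('a::polish_space, 'b::polish_space) conepair \<Rightarrow> real"
  assumes [measurable]: "v \<in> borel_measurable borel"
  shows "hdil v \<in> borel \<rightarrow>\<^sub>M borel"
proof -
  have [measurable]: "(\<lambda>z::('a, 'b) conepair. fst (fst z)) \<in> borel_measurable borel"
    "(\<lambda>z::('a, 'b) conepair. snd (fst z)) \<in> borel_measurable borel"
    "(\<lambda>z::('a, 'b) conepair. fst (snd z)) \<in> borel_measurable borel"
    "(\<lambda>z::('a, 'b) conepair. snd (snd z)) \<in> borel_measurable borel"
    by (intro borel_measurable_continuous_onI continuous_intros)+
  have "(\<lambda>z. ((fst (fst z), snd (fst z) / v z), (fst (snd z), snd (snd z) / v z))) \<in> borel \<rightarrow>\<^sub>M (borel \<Otimes>\<^sub>M borel) \<Otimes>\<^sub>M (borel \<Otimes>\<^sub>M borel)"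
    by measurable
  then show ?thesis unfolding hdil_eq[abs_def] by (simp add: borel_prod)
qed

lemma key_hom:
  fixes z z' :: "('a::metric_space, 'b::metric_space) conepair"
  assumes "snd (fst z) \<ge> 0" "snd (snd z) \<ge> 0" "snd (fst z') \<ge> 0" "snd (snd z') \<ge> 0"
    and "\<forall>z. v z > 0"
  shows "ennreal (v z' powr p) * (ennreal (v z powr p) * e2ennreal (max 0 (gw_cost \<phi> lam \<Delta> p (hdil v z) (hdil v z'))))
      = e2ennreal (max 0 (gw_cost \<phi> lam \<Delta> p z z'))"
    "ennreal (v z' powr p) * (ennreal (v z powr p) * e2ennreal (max 0 (- gw_cost \<phi> lam \<Delta> p (hdil v z) (hdil v z'))))
      = e2ennreal (max 0 (- gw_cost \<phi> lam \<Delta> p z z'))"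
proof -
  have w: "v z > 0" "v z' > 0" using assms(5) by blast+
  define W where "W = v z powr p * v z' powr p"
  have W: "W > 0" using w by (simp add: W_def)
  have 1: "ennreal (v z' powr p) * (ennreal (v z powr p) * ennreal (inverse W)) = 1"
    using W w by (simp add: W_def ennreal_mult''[symmetric] field_simps)
  have g: "gw_cost \<phi> lam \<Delta> p (hdil v z) (hdil v z') = ereal (inverse W) * gw_cost \<phi> lam \<Delta> p z z'"
    unfolding W_def using assms by (rule gw_cost_hom)
  show "ennreal (v z' powr p) * (ennreal (v z powr p) * e2ennreal (max 0 (gw_cost \<phi> lam \<Delta> p (hdil v z) (hdil v z'))))
      = e2ennreal (max 0 (gw_cost \<phi> lam \<Delta> p z z'))"
    unfolding g e2_hom[OF positive_imp_inverse_positive[OF W]]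
    by (metis 1 mult.assoc mult_1)
  show "ennreal (v z' powr p) * (ennreal (v z powr p) * e2ennreal (max 0 (- gw_cost \<phi> lam \<Delta> p (hdil v z) (hdil v z'))))
      = e2ennreal (max 0 (- gw_cost \<phi> lam \<Delta> p z z'))"
    unfolding g ereal_mult_minus_right[symmetric] e2_hom[OF positive_imp_inverse_positive[OF W]]
    by (metis 1 mult.assoc mult_1)
qed

lemma dil_integral:
  fixes \<alpha> :: "('a::polish_space, 'b::polish_space) conepair measure"
    and f :: "('a, 'b) conepair \<Rightarrow> real"
  assumes sa: "sets \<alpha> = sets borel" and vm: "v \<in> borel_measurable borel" and vpos: "\<forall>z. v z > 0"
    and fm: "f \<in> borel_measurable borel"
    and ae: "AE z in \<alpha>. v z powr p * f (hdil v z) = f z"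
  shows "integrable (dil p v \<alpha>) f \<longleftrightarrow> integrable \<alpha> f"
    "integral\<^sup>L (dil p v \<alpha>) f = integral\<^sup>L \<alpha> f"
proof -
  note sa[measurable_cong]
  note [measurable] = vm fm hdil_meas[OF vm]
  have hD: "hdil v \<in> density \<alpha> (\<lambda>z. ennreal (v z powr p)) \<rightarrow>\<^sub>M borel" by simp
  have ae': "AE z in \<alpha>. v z powr p *\<^sub>R f (hdil v z) = f z" using ae by simp
  show "integrable (dil p v \<alpha>) f \<longleftrightarrow> integrable \<alpha> f"
    unfolding dil_def
    apply (subst integrable_distr_eq[OF hD fm])
    apply (subst integrable_density)
       apply simp_all
    apply (rule integrable_cong_AE)
    using ae' by simp_all
  show "integral\<^sup>L (dil p v \<alpha>) f = integral\<^sup>L \<alpha> f"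
    unfolding dil_def
    apply (subst integral_distr[OF hD fm])
    apply (subst integral_density)
       apply simp_all
    apply (rule integral_cong_AE)
    using ae' by simp_all
qed

lemma dil_nn2:
  fixes \<alpha> :: "('a::polish_space, 'b::polish_space) conepair measure"
    and F :: "('a, 'b) conepair \<Rightarrow> ('a, 'b) conepair \<Rightarrow> ennreal"
  assumes sa: "sets \<alpha> = sets borel" and vm: "v \<in> borel_measurable borel" and vpos: "\<forall>z. v z > 0"
    and sf: "sigma_finite_measure (dil p v \<alpha>)"
    and Fm: "(\<lambda>zz. F (fst zz) (snd zz)) \<in> borel_measurable (borel \<Otimes>\<^sub>M borel)"
    and ae: "AE z in \<alpha>. snd (fst z) \<ge> 0 \<and> snd (snd z) \<ge> 0"
    and hom: "\<And>z z'. snd (fst z) \<ge> 0 \<Longrightarrow> snd (snd z) \<ge> 0 \<Longrightarrow> snd (fst z') \<ge> 0 \<Longrightarrow> snd (snd z') \<ge> 0 \<Longrightarrow>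
       ennreal (v z' powr p) * (ennreal (v z powr p) * F (hdil v z) (hdil v z')) = F z z'"
  shows "(\<integral>\<^sup>+z'. \<integral>\<^sup>+z. F z z' \<partial>dil p v \<alpha> \<partial>dil p v \<alpha>) = (\<integral>\<^sup>+z'. \<integral>\<^sup>+z. F z z' \<partial>\<alpha> \<partial>\<alpha>)"
proof -
  define M where "M = dil p v \<alpha>"
  define D where "D = density \<alpha> (\<lambda>z. ennreal (v z powr p))"
  have MD: "M = distr D borel (hdil v)" unfolding M_def D_def dil_def ..
  have sM: "sets M = sets borel" unfolding MD by simp
  have sD: "sets D = sets borel" unfolding D_def using sa by simp
  note sa[measurable_cong] sM[measurable_cong] sD[measurable_cong]
  note [measurable] = vm hdil_meas[OF vm] Fm
  have Fsec[measurable]: "(\<lambda>z. F z c) \<in> borel_measurable borel" for c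
  proof -
    have "(\<lambda>z::('a, 'b) conepair. (z, c)) \<in> borel \<rightarrow>\<^sub>M borel \<Otimes>\<^sub>M borel" by measurable
    from measurable_compose[OF this Fm] show ?thesis by simp
  qed
  have Fsw: "(\<lambda>x. F (snd x) (fst x)) \<in> borel_measurable (borel \<Otimes>\<^sub>M M)"
  proof -
    have "(\<lambda>x::('a, 'b) conepair \<times> ('a, 'b) conepair. (snd x, fst x)) \<in> borel \<Otimes>\<^sub>M M \<rightarrow>\<^sub>M borel \<Otimes>\<^sub>M borel"
      by measurable
    from measurable_compose[OF this Fm] show ?thesis by simp
  qed
  have Im[measurable]: "(\<lambda>z'. \<integral>\<^sup>+z. F z z' \<partial>M) \<in> borel_measurable borel"
    using sigma_finite_measure.borel_measurable_nn_integral[OF sf[folded M_def], of "\<lambda>z' z. F z z'" borel] Fsw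
    by (simp add: case_prod_beta')
  have inner: "(\<integral>\<^sup>+z. F z c \<partial>M) = (\<integral>\<^sup>+z. ennreal (v z powr p) * F (hdil v z) c \<partial>\<alpha>)" for c
    unfolding MD D_def
    by (subst nn_integral_distr) (simp_all add: nn_integral_density)
  define I where "I = (\<lambda>z'. \<integral>\<^sup>+z. F z z' \<partial>M)"
  have Im'[measurable]: "I \<in> borel_measurable borel" unfolding I_def by (rule Im)
  have "(\<integral>\<^sup>+z'. \<integral>\<^sup>+z. F z z' \<partial>M \<partial>M) = integral\<^sup>N M I" unfolding I_def ..
  also have "\<dots> = (\<integral>\<^sup>+z'. ennreal (v z' powr p) * I (hdil v z') \<partial>\<alpha>)"
    unfolding MD D_def
    by (subst nn_integral_distr) (simp_all add: nn_integral_density)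
  also have "\<dots> = (\<integral>\<^sup>+z'. \<integral>\<^sup>+z. ennreal (v z' powr p) * (ennreal (v z powr p) * F (hdil v z) (hdil v z')) \<partial>\<alpha> \<partial>\<alpha>)"
    unfolding I_def inner by (subst nn_integral_cmult) simp_all
  also have "\<dots> = (\<integral>\<^sup>+z'. \<integral>\<^sup>+z. F z z' \<partial>\<alpha> \<partial>\<alpha>)"
  proof (rule nn_integral_cong_AE)
    show "AE z' in \<alpha>. (\<integral>\<^sup>+z. ennreal (v z' powr p) * (ennreal (v z powr p) * F (hdil v z) (hdil v z')) \<partial>\<alpha>)
        = (\<integral>\<^sup>+z. F z z' \<partial>\<alpha>)"
      using ae
    proof eventually_elim
      case (elim z')
      show ?case
        using ae by (rule nn_integral_cong_AE[OF AE_mp]) (use elim hom in blast)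
    qed
  qed
  finally show ?thesis unfolding M_def .
qed

lemma dil_sigma_finite:
  fixes \<alpha> :: "('a::polish_space, 'b::polish_space) conepair measure"
  assumes sa: "sets \<alpha> = sets borel" and vm: "v \<in> borel_measurable borel" and vpos: "\<forall>z. v z > 0"
    and sfa: "sigma_finite_measure \<alpha>" and p: "p > 0"
    and ae: "AE z in \<alpha>. snd (fst z) \<ge> 0 \<and> snd (snd z) \<ge> 0"
    and fr: "(\<integral>\<^sup>+z. ennreal (snd (fst z) powr p) \<partial>dil p v \<alpha>) < \<infinity>"
    and fs: "(\<integral>\<^sup>+z. ennreal (snd (snd z) powr p) \<partial>dil p v \<alpha>) < \<infinity>"
  shows "sigma_finite_measure (dil p v \<alpha>)"
proof -
  define M where "M = dil p v \<alpha>"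
  define D where "D = density \<alpha> (\<lambda>z. ennreal (v z powr p))"
  have MD: "M = distr D borel (hdil v)" unfolding M_def D_def dil_def ..
  have sM: "sets M = sets borel" unfolding MD by simp
  have sD: "sets D = sets borel" unfolding D_def using sa by simp
  have spM: "space M = UNIV" using sets_eq_imp_space_eq[OF sM] by simp
  have spa: "space \<alpha> = UNIV" using sets_eq_imp_space_eq[OF sa] by simp
  note sa[measurable_cong] sM[measurable_cong] sD[measurable_cong]
  have [measurable]: "(\<lambda>z::('a, 'b) conepair. fst (fst z)) \<in> borel_measurable borel"
    "(\<lambda>z::('a, 'b) conepair. snd (fst z)) \<in> borel_measurable borel"
    "(\<lambda>z::('a, 'b) conepair. fst (snd z)) \<in> borel_measurable borel"
    "(\<lambda>z::('a, 'b) conepair. snd (snd z)) \<in> borel_measurable borel"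
    by (intro borel_measurable_continuous_onI continuous_intros)+
  note [measurable] = vm hdil_meas[OF vm]
  obtain E :: "nat \<Rightarrow> ('a, 'b) conepair set" where E: "range E \<subseteq> sets \<alpha>" "(\<Union>i. E i) = space \<alpha>"
    "\<And>i. emeasure \<alpha> (E i) \<noteq> \<infinity>"
    using sigma_finite_measure.sigma_finite[OF sfa] by metis
  define P where "P n = {z::('a, 'b) conepair. inverse (real (Suc n)) < snd (fst z)}" for n
  define Q where "Q n = {z::('a, 'b) conepair. inverse (real (Suc n)) < snd (snd z)}" for n
  define N where "N = {z::('a, 'b) conepair. snd (fst z) < 0 \<or> snd (snd z) < 0}"
  define C where "C kn = E (fst kn) \<inter> {z. snd (fst z) = 0 \<and> snd (snd z) = 0 \<and> v z \<le> real (snd kn)}" for kn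
  have Pm: "P n \<in> sets M" for n unfolding P_def sM by measurable
  have Qm: "Q n \<in> sets M" for n unfolding Q_def sM by measurable
  have Nm: "N \<in> sets M" unfolding N_def sM by measurable
  have Cm: "C kn \<in> sets M" for kn
  proof -
    have "E (fst kn) \<in> sets borel" using E(1) sa by auto
    then show ?thesis unfolding C_def sM by measurable
  qed
  have Pf: "emeasure M (P n) \<noteq> \<infinity>" for n
  proof -
    have "emeasure M (P n) = (\<integral>\<^sup>+z. indicator (P n) z \<partial>M)" using Pm by simp
    also have "\<dots> \<le> (\<integral>\<^sup>+z. ennreal (real (Suc n) powr p) * ennreal (snd (fst z) powr p) \<partial>M)"
    proof (rule nn_integral_mono)
      fix z
      show "indicator (P n) z \<le> ennreal (real (Suc n) powr p) * ennreal (snd (fst z) powr p)"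
      proof (cases "z \<in> P n")
        case True
        then have r: "inverse (real (Suc n)) < snd (fst z)" by (simp add: P_def)
        then have "1 < real (Suc n) * snd (fst z)"
          by (simp add: field_simps)
        then have "1 \<le> (real (Suc n) * snd (fst z)) powr p"
          using p by (intro ge_one_powr_ge_zero) auto
        also have "\<dots> = real (Suc n) powr p * snd (fst z) powr p"
          using r by (intro powr_mult; auto intro: less_trans[OF positive_imp_inverse_positive])
        finally show ?thesis using True by (simp add: ennreal_mult''[symmetric])
      qed simp
    qed
    also have "\<dots> = ennreal (real (Suc n) powr p) * (\<integral>\<^sup>+z. ennreal (snd (fst z) powr p) \<partial>M)"
      by (rule nn_integral_cmult) measurable
    also have "\<dots> < \<infinity>" using fr unfolding M_def[symmetric]
      by (simp add: ennreal_mult_less_top)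
    finally show ?thesis by simp
  qed
  have Qf: "emeasure M (Q n) \<noteq> \<infinity>" for n
  proof -
    have "emeasure M (Q n) = (\<integral>\<^sup>+z. indicator (Q n) z \<partial>M)" using Qm by simp
    also have "\<dots> \<le> (\<integral>\<^sup>+z. ennreal (real (Suc n) powr p) * ennreal (snd (snd z) powr p) \<partial>M)"
    proof (rule nn_integral_mono)
      fix z
      show "indicator (Q n) z \<le> ennreal (real (Suc n) powr p) * ennreal (snd (snd z) powr p)"
      proof (cases "z \<in> Q n")
        case True
        then have r: "inverse (real (Suc n)) < snd (snd z)" by (simp add: Q_def)
        then have "1 < real (Suc n) * snd (snd z)"
          by (simp add: field_simps)
        then have "1 \<le> (real (Suc n) * snd (snd z)) powr p"
          using p by (intro ge_one_powr_ge_zero) auto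
        also have "\<dots> = real (Suc n) powr p * snd (snd z) powr p"
          using r by (intro powr_mult; auto intro: less_trans[OF positive_imp_inverse_positive])
        finally show ?thesis using True by (simp add: ennreal_mult''[symmetric])
      qed simp
    qed
    also have "\<dots> = ennreal (real (Suc n) powr p) * (\<integral>\<^sup>+z. ennreal (snd (snd z) powr p) \<partial>M)"
      by (rule nn_integral_cmult) measurable
    also have "\<dots> < \<infinity>" using fs unfolding M_def[symmetric]
      by (simp add: ennreal_mult_less_top)
    finally show ?thesis by simp
  qed
  have aeM: "AE z in M. snd (fst z) \<ge> 0 \<and> snd (snd z) \<ge> 0"
    unfolding MD D_def
  proof (subst AE_distr_iff)
    show "AE x in density \<alpha> (\<lambda>z. ennreal (v z powr p)). 0 \<le> snd (fst (hdil v x)) \<and> 0 \<le> snd (snd (hdil v x))"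
      apply (subst AE_density)
       apply measurable
      using ae
    proof eventually_elim
      case (elim z)
      have "v z > 0" using vpos by blast
      then show ?case using elim by (simp add: hdil_eq)
    qed
  qed simp_all
  have Nf: "emeasure M N \<noteq> \<infinity>"
  proof -
    have "emeasure M N = 0"
      using aeM Nm by (subst (asm) AE_iff_measurable[OF Nm]) (auto simp: N_def spM not_le)
    then show ?thesis by simp
  qed
  have Cf: "emeasure M (C kn) \<noteq> \<infinity>" for kn
  proof -
    obtain k n where kn: "kn = (k, n)" by (cases kn)
    have Em: "E k \<in> sets \<alpha>" using E(1) by auto
    have Cma: "C kn \<in> sets \<alpha>" using Cm sM sa by simp
    have "emeasure M (C kn) = emeasure D (hdil v -` C kn \<inter> space D)"
      unfolding MD using Cm sM by (intro emeasure_distr) auto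
    also have "\<dots> \<le> emeasure D (C kn)"
    proof (rule emeasure_mono)
      show "hdil v -` C kn \<inter> space D \<subseteq> C kn"
      proof
        fix z assume "z \<in> hdil v -` C kn \<inter> space D"
        then have "hdil v z \<in> C kn" by simp
        moreover have "v z > 0" using vpos by blast
        ultimately have z0: "snd (fst z) = 0" "snd (snd z) = 0"
          by (auto simp: C_def hdil_eq)
        then have "hdil v z = z" by (simp add: hdil_eq prod_eq_iff)
        then show "z \<in> C kn" using \<open>hdil v z \<in> C kn\<close> by simp
      qed
      show "C kn \<in> sets D" using Cm sM sD by simp
    qed
    also have "\<dots> = (\<integral>\<^sup>+z. ennreal (v z powr p) * indicator (C kn) z \<partial>\<alpha>)"
      unfolding D_def by (rule emeasure_density[OF _ Cma]) measurable
    also have "\<dots> \<le> (\<integral>\<^sup>+z. ennreal (real n powr p) * indicator (E k) z \<partial>\<alpha>)"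
    proof (rule nn_integral_mono)
      fix z
      show "ennreal (v z powr p) * indicator (C kn) z \<le> ennreal (real n powr p) * indicator (E k) z"
      proof (cases "z \<in> C kn")
        case True
        then have vn: "v z \<le> real n" and zE: "z \<in> E k" by (auto simp: C_def kn)
        have v0: "v z > 0" using vpos by blast
        have "v z powr p \<le> real n powr p"
          using p v0 vn by (simp add: powr_mono2)
        then have "ennreal (v z powr p) \<le> ennreal (real n powr p)" by (rule ennreal_leI)
        then show ?thesis using True zE by simp
      qed simp
    qed
    also have "\<dots> = ennreal (real n powr p) * emeasure \<alpha> (E k)"
      using Em by (rule nn_integral_cmult_indicator)
    also have "\<dots> < \<infinity>" using E(3)[of k] by (simp add: ennreal_mult_less_top top.not_eq_extremum)
    finally show ?thesis by simp
  qed
  define A where "A = range P \<union> range Q \<union> {N} \<union> range C"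
  have "countable A" unfolding A_def by simp
  moreover have "A \<subseteq> sets M" unfolding A_def using Pm Qm Nm Cm by blast
  moreover have "\<Union>A = space M"
  proof -
    have "z \<in> \<Union>A" for z
    proof -
      consider "snd (fst z) < 0 \<or> snd (snd z) < 0" | "snd (fst z) > 0" | "snd (snd z) > 0"
        | "snd (fst z) = 0 \<and> snd (snd z) = 0" by linarith
      then show ?thesis
      proof cases
        case 1
        then have "z \<in> N" by (simp add: N_def)
        then show ?thesis by (rule UnionI[rotated]) (simp add: A_def)
      next
        case 2
        then obtain m :: nat where m: "m > 0" "inverse (real m) < snd (fst z)"
          using ex_inverse_of_nat_less[OF 2] by blast
        then have "z \<in> P (m - 1)" unfolding P_def by (simp add: Suc_pred)
        then show ?thesis by (rule UnionI[rotated]) (simp add: A_def)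
      next
        case 3
        then obtain m :: nat where m: "m > 0" "inverse (real m) < snd (snd z)"
          using ex_inverse_of_nat_less[OF 3] by blast
        then have "z \<in> Q (m - 1)" unfolding Q_def by (simp add: Suc_pred)
        then show ?thesis by (rule UnionI[rotated]) (simp add: A_def)
      next
        case 4
        have "z \<in> (\<Union>i. E i)" using E(2) spa by simp
        then obtain k where "z \<in> E k" by (rule UN_E)
        moreover have "v z \<le> real (nat \<lceil>v z\<rceil>)" by (rule real_nat_ceiling_ge)
        ultimately have "z \<in> C (k, nat \<lceil>v z\<rceil>)" using 4 by (simp add: C_def)
        then show ?thesis by (rule UnionI[rotated]) (simp add: A_def)
      qed
    qed
    then show ?thesis unfolding spM by blast
  qed
  moreover have "\<forall>a\<in>A. emeasure M a \<noteq> \<infinity>" unfolding A_def using Pf Qf Nf Cf by blast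
  ultimately show ?thesis unfolding sigma_finite_measure_def M_def[symmetric] by blast
qed

lemma dil_AE:
  fixes \<alpha> :: "('a::polish_space, 'b::polish_space) conepair measure"
  assumes sa: "sets \<alpha> = sets borel" and vm: "v \<in> borel_measurable borel" and vpos: "\<forall>z. v z > 0"
    and ae: "AE z in \<alpha>. snd (fst z) \<ge> 0 \<and> snd (snd z) \<ge> 0"
  shows "AE z in dil p v \<alpha>. snd (fst z) \<ge> 0 \<and> snd (snd z) \<ge> 0"
proof -
  note sa[measurable_cong]
  have [measurable]: "(\<lambda>z::('a, 'b) conepair. snd (fst z)) \<in> borel_measurable borel"
    "(\<lambda>z::('a, 'b) conepair. snd (snd z)) \<in> borel_measurable borel"
    by (intro borel_measurable_continuous_onI continuous_intros)+
  note [measurable] = vm hdil_meas[OF vm]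
  show ?thesis
    unfolding dil_def
  proof (subst AE_distr_iff)
    show "AE x in density \<alpha> (\<lambda>z. ennreal (v z powr p)). 0 \<le> snd (fst (hdil v x)) \<and> 0 \<le> snd (snd (hdil v x))"
      apply (subst AE_density)
       apply measurable
      using ae
    proof eventually_elim
      case (elim z)
      have "v z > 0" using vpos by blast
      then show ?case using elim by (simp add: hdil_eq)
    qed
  qed simp_all
qed

theorem lemma2:
  fixes \<mu> :: "'a::polish_space measure" and \<nu> :: "'b::polish_space measure"
    and \<phi> :: "real \<Rightarrow> ereal" and lam :: "real \<Rightarrow> real" and \<Delta> :: "real \<Rightarrow> real \<Rightarrow> real"
    and p q :: real
    and \<alpha> :: "('a, 'b) conepair measure" and v :: "('a, 'b) conepair \<Rightarrow> real"
  assumes "mm_measure \<mu>" and "mm_measure \<nu>"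
    and "entropy \<phi>" and "distance_on {0..} \<Delta>" and "p > 0" and "q > 0"
    and cost_meas: "(\<lambda>zz::(('a, 'b) conepair \<times> ('a, 'b) conepair). gw_cost \<phi> lam \<Delta> p (fst zz) (snd zz))
                      \<in> borel_measurable (borel \<Otimes>\<^sub>M borel)"
    and "Up p \<mu> \<nu> \<alpha>"
    and "v \<in> borel_measurable borel" and "\<forall>z. v z > 0"
  shows "Up p \<mu> \<nu> (dil p v \<alpha>) \<and> Hfun \<phi> lam \<Delta> p (dil p v \<alpha>) = Hfun \<phi> lam \<Delta> p \<alpha>"
proof -
  note p = \<open>p > 0\<close> and vm = \<open>v \<in> borel_measurable borel\<close> and vpos = \<open>\<forall>z. v z > 0\<close>
  have Mp: "Mplus \<alpha>" using \<open>Up p \<mu> \<nu> \<alpha>\<close> by (simp add: Up_def)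
  have sa: "sets \<alpha> = sets borel" and sfa: "sigma_finite_measure \<alpha>"
    and ae: "AE z in \<alpha>. snd (fst z) \<ge> 0 \<and> snd (snd z) \<ge> 0"
    using Mp by (auto simp: Mplus_def)
  have [measurable]: "(\<lambda>z::('a, 'b) conepair. fst (fst z)) \<in> borel_measurable borel"
    "(\<lambda>z::('a, 'b) conepair. snd (fst z)) \<in> borel_measurable borel"
    "(\<lambda>z::('a, 'b) conepair. fst (snd z)) \<in> borel_measurable borel"
    "(\<lambda>z::('a, 'b) conepair. snd (snd z)) \<in> borel_measurable borel"
    by (intro borel_measurable_continuous_onI continuous_intros)+
  have U1: "integrable (dil p v \<alpha>) (\<lambda>z. \<xi> (fst (fst z)) * snd (fst z) powr p) \<longleftrightarrow>
          integrable \<alpha> (\<lambda>z. \<xi> (fst (fst z)) * snd (fst z) powr p)"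
    "(\<integral>z. \<xi> (fst (fst z)) * snd (fst z) powr p \<partial>dil p v \<alpha>) = (\<integral>z. \<xi> (fst (fst z)) * snd (fst z) powr p \<partial>\<alpha>)"
    if "continuous_on UNIV \<xi>" for \<xi> :: "'a \<Rightarrow> real"
  proof -
    have [measurable]: "\<xi> \<in> borel_measurable borel" using that by (rule borel_measurable_continuous_onI)
    have fm: "(\<lambda>z::('a, 'b) conepair. \<xi> (fst (fst z)) * snd (fst z) powr p) \<in> borel_measurable borel"
      by measurable
    have "AE z in \<alpha>. v z powr p * (\<xi> (fst (fst (hdil v z))) * snd (fst (hdil v z)) powr p) = \<xi> (fst (fst z)) * snd (fst z) powr p"
      using ae
    proof eventually_elim
      case (elim z)
      have "v z > 0" using vpos by blast
      then show ?case using elim by (simp add: hdil_eq powr_divide)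
    qed
    from dil_integral[OF sa vm vpos fm this]
    show "integrable (dil p v \<alpha>) (\<lambda>z. \<xi> (fst (fst z)) * snd (fst z) powr p) \<longleftrightarrow>
          integrable \<alpha> (\<lambda>z. \<xi> (fst (fst z)) * snd (fst z) powr p)"
      "(\<integral>z. \<xi> (fst (fst z)) * snd (fst z) powr p \<partial>dil p v \<alpha>) = (\<integral>z. \<xi> (fst (fst z)) * snd (fst z) powr p \<partial>\<alpha>)"
      by auto
  qed
  have U2: "integrable (dil p v \<alpha>) (\<lambda>z. \<zeta> (fst (snd z)) * snd (snd z) powr p) \<longleftrightarrow>
          integrable \<alpha> (\<lambda>z. \<zeta> (fst (snd z)) * snd (snd z) powr p)"
    "(\<integral>z. \<zeta> (fst (snd z)) * snd (snd z) powr p \<partial>dil p v \<alpha>) = (\<integral>z. \<zeta> (fst (snd z)) * snd (snd z) powr p \<partial>\<alpha>)"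
    if "continuous_on UNIV \<zeta>" for \<zeta> :: "'b \<Rightarrow> real"
  proof -
    have [measurable]: "\<zeta> \<in> borel_measurable borel" using that by (rule borel_measurable_continuous_onI)
    have fm: "(\<lambda>z::('a, 'b) conepair. \<zeta> (fst (snd z)) * snd (snd z) powr p) \<in> borel_measurable borel"
      by measurable
    have "AE z in \<alpha>. v z powr p * (\<zeta> (fst (snd (hdil v z))) * snd (snd (hdil v z)) powr p) = \<zeta> (fst (snd z)) * snd (snd z) powr p"
      using ae
    proof eventually_elim
      case (elim z)
      have "v z > 0" using vpos by blast
      then show ?case using elim by (simp add: hdil_eq powr_divide)
    qed
    from dil_integral[OF sa vm vpos fm this]
    show "integrable (dil p v \<alpha>) (\<lambda>z. \<zeta> (fst (snd z)) * snd (snd z) powr p) \<longleftrightarrow>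
          integrable \<alpha> (\<lambda>z. \<zeta> (fst (snd z)) * snd (snd z) powr p)"
      "(\<integral>z. \<zeta> (fst (snd z)) * snd (snd z) powr p \<partial>dil p v \<alpha>) = (\<integral>z. \<zeta> (fst (snd z)) * snd (snd z) powr p \<partial>\<alpha>)"
      by auto
  qed
  have c1: "continuous_on UNIV (\<lambda>_::'a. 1::real)" "bounded (range (\<lambda>_::'a. 1::real))" by auto
  have c2: "continuous_on UNIV (\<lambda>_::'b. 1::real)" "bounded (range (\<lambda>_::'b. 1::real))" by auto
  have i1: "integrable (dil p v \<alpha>) (\<lambda>z. snd (fst z) powr p)"
  proof -
    have "integrable \<alpha> (\<lambda>z. (\<lambda>_::'a. 1::real) (fst (fst z)) * snd (fst z) powr p)"
      using \<open>Up p \<mu> \<nu> \<alpha>\<close> c1 unfolding Up_def by blast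
    then show ?thesis using U1(1)[OF c1(1)] by simp
  qed
  have i2: "integrable (dil p v \<alpha>) (\<lambda>z. snd (snd z) powr p)"
  proof -
    have "integrable \<alpha> (\<lambda>z. (\<lambda>_::'b. 1::real) (fst (snd z)) * snd (snd z) powr p)"
      using \<open>Up p \<mu> \<nu> \<alpha>\<close> c2 unfolding Up_def by blast
    then show ?thesis using U2(1)[OF c2(1)] by simp
  qed
  have fr: "(\<integral>\<^sup>+z. ennreal (snd (fst z) powr p) \<partial>dil p v \<alpha>) < \<infinity>"
    using i1 unfolding integrable_iff_bounded by simp
  have fs: "(\<integral>\<^sup>+z. ennreal (snd (snd z) powr p) \<partial>dil p v \<alpha>) < \<infinity>"
    using i2 unfolding integrable_iff_bounded by simp
  have sf: "sigma_finite_measure (dil p v \<alpha>)"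
    by (rule dil_sigma_finite[OF sa vm vpos sfa p ae fr fs])
  have sdil: "sets (dil p v \<alpha>) = sets borel" by (simp add: dil_def)
  have Mpd: "Mplus (dil p v \<alpha>)"
    unfolding Mplus_def using sdil sf dil_AE[OF sa vm vpos ae] by simp
  have Upd: "Up p \<mu> \<nu> (dil p v \<alpha>)"
    using \<open>Up p \<mu> \<nu> \<alpha>\<close> Mpd U1 U2 unfolding Up_def by simp
  note [measurable] = cost_meas
  have Fm1: "(\<lambda>zz::(('a, 'b) conepair \<times> ('a, 'b) conepair). (\<lambda>z z'. e2ennreal (max 0 (gw_cost \<phi> lam \<Delta> p z z'))) (fst zz) (snd zz)) \<in> borel_measurable (borel \<Otimes>\<^sub>M borel)"
  proof -
    have "(\<lambda>x::ereal. e2ennreal (max 0 x)) \<in> borel \<rightarrow>\<^sub>M borel" by measurable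
    from measurable_compose[OF cost_meas this] show ?thesis .
  qed
  have Fm2: "(\<lambda>zz::(('a, 'b) conepair \<times> ('a, 'b) conepair). (\<lambda>z z'. e2ennreal (max 0 (- gw_cost \<phi> lam \<Delta> p z z'))) (fst zz) (snd zz)) \<in> borel_measurable (borel \<Otimes>\<^sub>M borel)"
  proof -
    have "(\<lambda>x::ereal. e2ennreal (max 0 (- x))) \<in> borel \<rightarrow>\<^sub>M borel" by measurable
    from measurable_compose[OF cost_meas this] show ?thesis .
  qed
  have H1: "(\<integral>\<^sup>+z'. \<integral>\<^sup>+z. e2ennreal (max 0 (gw_cost \<phi> lam \<Delta> p z z')) \<partial>dil p v \<alpha> \<partial>dil p v \<alpha>)
      = (\<integral>\<^sup>+z'. \<integral>\<^sup>+z. e2ennreal (max 0 (gw_cost \<phi> lam \<Delta> p z z')) \<partial>\<alpha> \<partial>\<alpha>)"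
    by (rule dil_nn2[OF sa vm vpos sf Fm1 ae]) (rule key_hom(1)[OF _ _ _ _ vpos])
  have H2: "(\<integral>\<^sup>+z'. \<integral>\<^sup>+z. e2ennreal (max 0 (- gw_cost \<phi> lam \<Delta> p z z')) \<partial>dil p v \<alpha> \<partial>dil p v \<alpha>)
      = (\<integral>\<^sup>+z'. \<integral>\<^sup>+z. e2ennreal (max 0 (- gw_cost \<phi> lam \<Delta> p z z')) \<partial>\<alpha> \<partial>\<alpha>)"
    by (rule dil_nn2[OF sa vm vpos sf Fm2 ae]) (rule key_hom(2)[OF _ _ _ _ vpos])
  show ?thesis using Upd H1 H2 unfolding Hfun_def by simp
qed

end
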